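(* Let $M$ be a unique expansion matroid on a finite set $E$ with $r(M)>0$, and write $F(M)=\{K_1,K_2,\dots,K_t\}$ with the $K_i$ distinct. Then $\mathcal{B}(M)=\{\{b_1,b_2,\dots,b_t\}: b_i\in K_i,\ 1\le i\le t\}$.
   Context: For a matroid $M$: $\mathcal{I}(M)$ its independent sets, $\mathcal{B}(M)$ its bases, $r(M)$ the size of a base, $r(X)$ the rank of $X\subseteq E$. $s(M)=\{A\in\mathcal{I}(M): |A|=r(M)-1\}$; $K_M(X)=\{a\in E: r(X\cup\{a\})=r(X)+1\}$; $F(M)=\{K_M(X): X\in s(M)\}$. $M$ is a unique expansion matroid if for every $B\in\mathcal{B}(M)$ and every $A\in s(M)$, whenever $e_1,e_2\in B$ satisfy $A\cup\{e_1\}\in\mathcal{B}(M)$ and $A\cup\{e_2\}\in\mathcal{B}(M)$, then $e_1=e_2$. *)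

theory Defs
  imports Main
begin

definition matroid :: "'a set \<Rightarrow> 'a set set \<Rightarrow> bool" where
  "matroid E Ind \<longleftrightarrow> finite E \<and> (\<forall>A\<in>Ind. A \<subseteq> E) \<and> {} \<in> Ind
     \<and> (\<forall>A B. B \<in> Ind \<longrightarrow> A \<subseteq> B \<longrightarrow> A \<in> Ind)
     \<and> (\<forall>A B. A \<in> Ind \<longrightarrow> B \<in> Ind \<longrightarrow> card A < card B \<longrightarrow> (\<exists>x\<in>B - A. insert x A \<in> Ind))"

definition bases :: "'a set \<Rightarrow> 'a set set \<Rightarrow> 'a set set" where
  "bases E Ind = {B. B \<in> Ind \<and> (\<forall>C\<in>Ind. B \<subseteq> C \<longrightarrow> C = B)}"

definition rank :: "'a set set \<Rightarrow> 'a set \<Rightarrow> nat" where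
  "rank Ind X = Max {card A | A. A \<in> Ind \<and> A \<subseteq> X}"

definition mrank :: "'a set \<Rightarrow> 'a set set \<Rightarrow> nat" where
  "mrank E Ind = rank Ind E"

definition sM :: "'a set \<Rightarrow> 'a set set \<Rightarrow> 'a set set" where
  "sM E Ind = {A. A \<in> Ind \<and> card A = mrank E Ind - 1}"

definition KM :: "'a set \<Rightarrow> 'a set set \<Rightarrow> 'a set \<Rightarrow> 'a set" where
  "KM E Ind X = {a \<in> E. rank Ind (insert a X) = rank Ind X + 1}"

definition FM :: "'a set \<Rightarrow> 'a set set \<Rightarrow> 'a set set" where
  "FM E Ind = KM E Ind ` sM E Ind"

definition unique_expansion :: "'a set \<Rightarrow> 'a set set \<Rightarrow> bool" where
  "unique_expansion E Ind \<longleftrightarrow> matroid E Ind \<and>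
    (\<forall>B\<in>bases E Ind. \<forall>A\<in>sM E Ind. \<forall>e1\<in>B. \<forall>e2\<in>B.
       insert e1 A \<in> bases E Ind \<longrightarrow> insert e2 A \<in> bases E Ind \<longrightarrow> e1 = e2)"

end

theory Submission
  imports Defs
begin

locale mat =
  fixes E :: "'a set" and Ind :: "'a set set"
  assumes M: "matroid E Ind"
begin

lemma finE: "finite E" using M unfolding matroid_def by blast
lemma indE: "A \<in> Ind \<Longrightarrow> A \<subseteq> E" using M unfolding matroid_def by blast
lemma indfin: "A \<in> Ind \<Longrightarrow> finite A" using indE finE finite_subset by blast
lemma empty_ind: "{} \<in> Ind" using M unfolding matroid_def by blast
lemma ind_sub: "B \<in> Ind \<Longrightarrow> A \<subseteq> B \<Longrightarrow> A \<in> Ind" using M unfolding matroid_def by blast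
lemma aug1: "A \<in> Ind \<Longrightarrow> B \<in> Ind \<Longrightarrow> card A < card B \<Longrightarrow> \<exists>x\<in>B - A. insert x A \<in> Ind"
  using M unfolding matroid_def by blast

lemma rank_set_fin: "finite {card A | A. A \<in> Ind \<and> A \<subseteq> X}"
proof -
  have "{card A | A. A \<in> Ind \<and> A \<subseteq> X} \<subseteq> {..card E}"
    using indE finE card_mono by fastforce
  then show ?thesis using finite_subset by blast
qed

lemma rank_set_ne: "{card A | A. A \<in> Ind \<and> A \<subseteq> X} \<noteq> {}"
  using empty_ind by blast

lemma rank_ge: "A \<in> Ind \<Longrightarrow> A \<subseteq> X \<Longrightarrow> card A \<le> rank Ind X"
proof -
  assume "A \<in> Ind" "A \<subseteq> X"
  hence "card A \<in> {card A | A. A \<in> Ind \<and> A \<subseteq> X}" by blast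
  then show ?thesis unfolding rank_def using rank_set_fin by (rule Max_ge[rotated])
qed

lemma rank_obtain: "\<exists>A\<in>Ind. A \<subseteq> X \<and> card A = rank Ind X"
proof -
  have "rank Ind X \<in> {card A | A. A \<in> Ind \<and> A \<subseteq> X}"
    unfolding rank_def using rank_set_fin rank_set_ne by (rule Max_in)
  then obtain A where "A \<in> Ind" "A \<subseteq> X" "rank Ind X = card A" by (smt (verit) mem_Collect_eq)
  then show ?thesis by metis
qed

lemma rank_le_card: "finite X \<Longrightarrow> rank Ind X \<le> card X"
proof -
  assume f: "finite X"
  obtain A where "A\<in>Ind" "A \<subseteq> X" "card A = rank Ind X" using rank_obtain[of X] by blast
  then show ?thesis using card_mono[OF f] by metis
qed

lemma rank_ind: "A \<in> Ind \<Longrightarrow> rank Ind A = card A"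
proof -
  assume a: "A \<in> Ind"
  have "card A \<le> rank Ind A" using rank_ge[OF a] by blast
  moreover have "rank Ind A \<le> card A" using rank_le_card indfin[OF a] by blast
  ultimately show ?thesis by linarith
qed

abbreviation "r \<equiv> mrank E Ind"

lemma ind_le_r: "A \<in> Ind \<Longrightarrow> card A \<le> r"
  unfolding mrank_def by (rule rank_ge[OF _ indE])

lemma exists_r: "\<exists>A\<in>Ind. card A = r"
  unfolding mrank_def using rank_obtain by blast

lemma aug_lemma:
  "I \<in> Ind \<Longrightarrow> J \<in> Ind \<Longrightarrow> card I \<le> card J \<Longrightarrow> \<exists>C\<in>Ind. I \<subseteq> C \<and> C \<subseteq> I \<union> J \<and> card C = card J"
proof (induction "card J - card I" arbitrary: I)
  case 0
  then show ?case by auto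
next
  case (Suc n)
  have lt: "card I < card J" using Suc.hyps(2) by linarith
  obtain x where x: "x \<in> J - I" "insert x I \<in> Ind" using aug1[OF Suc.prems(1,2) lt] by blast
  have c: "card (insert x I) = card I + 1" using x indfin[OF Suc.prems(1)] by simp
  have n: "n = card J - card (insert x I)" "card (insert x I) \<le> card J" using c Suc.hyps(2) by linarith+
  from Suc.hyps(1)[OF n(1) x(2) Suc.prems(2) n(2)]
  obtain C where "C \<in> Ind" "insert x I \<subseteq> C" "C \<subseteq> insert x I \<union> J" "card C = card J" by auto
  then show ?case using x by blast
qed

lemma base_iff: "B \<in> bases E Ind \<longleftrightarrow> B \<in> Ind \<and> card B = r"
proof
  assume B: "B \<in> bases E Ind"
  hence Bi: "B \<in> Ind" unfolding bases_def by blast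
  have "card B = r"
  proof (rule ccontr)
    assume "card B \<noteq> r"
    hence lt: "card B < r" using ind_le_r Bi by force
    obtain J where J: "J \<in> Ind" "card J = r" using exists_r by blast
    obtain x where x: "x \<in> J - B" "insert x B \<in> Ind" using aug1[OF Bi J(1)] lt J by auto
    then show False using B unfolding bases_def by blast
  qed
  with Bi show "B \<in> Ind \<and> card B = r" by blast
next
  assume B: "B \<in> Ind \<and> card B = r"
  show "B \<in> bases E Ind" unfolding bases_def
  proof (safe)
    show "B \<in> Ind" using B by blast
  next
    fix C x assume C: "C \<in> Ind" "B \<subseteq> C" "x \<in> C"
    have "card B \<le> card C" "card C \<le> r" using ind_le_r[OF C(1)] card_mono[OF indfin[OF C(1)] C(2)] by auto
    hence "card B = card C" using B by linarith
    hence "C = B" using card_subset_eq[OF indfin[OF C(1)] C(2)] by simp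
    then show "x \<in> B" using C by blast
  qed
qed

lemma extend: "I \<in> Ind \<Longrightarrow> \<exists>B\<in>bases E Ind. I \<subseteq> B"
proof -
  assume I: "I \<in> Ind"
  obtain J where J: "J \<in> Ind" "card J = r" using exists_r by blast
  obtain C where "C\<in>Ind" "I \<subseteq> C" "card C = card J"
    using aug_lemma[OF I J(1)] ind_le_r[OF I] J by auto
  then show ?thesis using base_iff J by auto
qed

lemma KM_sM: "A \<in> sM E Ind \<Longrightarrow> KM E Ind A = {a \<in> E. a \<notin> A \<and> insert a A \<in> Ind}"
proof -
  assume A: "A \<in> sM E Ind"
  hence Ai: "A \<in> Ind" unfolding sM_def by blast
  have fA: "finite A" using indfin Ai by blast
  have "rank Ind (insert a A) = card A + 1 \<longleftrightarrow> a \<notin> A \<and> insert a A \<in> Ind" for a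
  proof
    assume h: "rank Ind (insert a A) = card A + 1"
    obtain C where C: "C \<in> Ind" "C \<subseteq> insert a A" "card C = card A + 1"
      using rank_obtain[of "insert a A"] h by metis
    have fi: "finite (insert a A)" using fA by simp
    have cle: "card C \<le> card (insert a A)" using card_mono[OF fi C(2)] .
    have na: "a \<notin> A"
    proof
      assume "a \<in> A"
      hence "insert a A = A" by (rule insert_absorb)
      thus False using cle C(3) by simp
    qed
    have "card (insert a A) = card A + 1" using na fA by simp
    hence "C = insert a A" using card_subset_eq[OF fi C(2)] C(3) by simp
    then show "a \<notin> A \<and> insert a A \<in> Ind" using na C by blast
  next
    assume h: "a \<notin> A \<and> insert a A \<in> Ind"
    have "card (insert a A) \<le> rank Ind (insert a A)" using h rank_ge[of "insert a A" "insert a A"] by simp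
    moreover have "rank Ind (insert a A) \<le> card (insert a A)" using fA rank_le_card[of "insert a A"] by simp
    moreover have "card (insert a A) = card A + 1" using h fA by simp
    ultimately show "rank Ind (insert a A) = card A + 1" by linarith
  qed
  then show ?thesis unfolding KM_def rank_ind[OF Ai] by blast
qed

end

locale ue = mat +
  assumes UE: "unique_expansion E Ind" and rpos: "r > 0"
begin

lemma ins_base: "A \<in> sM E Ind \<Longrightarrow> x \<in> KM E Ind A \<Longrightarrow> insert x A \<in> bases E Ind"
  using KM_sM[of A] rpos unfolding base_iff sM_def
  by (auto simp: indfin)

lemma K_meets: "A \<in> sM E Ind \<Longrightarrow> B \<in> bases E Ind \<Longrightarrow> \<exists>x\<in>B. x \<in> KM E Ind A"
proof -
  assume A: "A \<in> sM E Ind" and B: "B \<in> bases E Ind"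
  have Ai: "A \<in> Ind" and cA: "card A = r - 1" using A unfolding sM_def by auto
  have Bi: "B \<in> Ind" and cB: "card B = r" using B base_iff by auto
  obtain x where x: "x \<in> B - A" "insert x A \<in> Ind" using aug1[OF Ai Bi] cA cB rpos by auto
  then show ?thesis using KM_sM[OF A] indE[OF Bi] by auto
qed

lemma K_unique: "A \<in> sM E Ind \<Longrightarrow> B \<in> bases E Ind \<Longrightarrow> x \<in> B \<Longrightarrow> y \<in> B
  \<Longrightarrow> x \<in> KM E Ind A \<Longrightarrow> y \<in> KM E Ind A \<Longrightarrow> x = y"
proof -
  assume h: "A \<in> sM E Ind" "B \<in> bases E Ind" "x \<in> B" "y \<in> B" "x \<in> KM E Ind A" "y \<in> KM E Ind A"
  have U: "\<forall>B\<in>bases E Ind. \<forall>A\<in>sM E Ind. \<forall>e1\<in>B. \<forall>e2\<in>B.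
       insert e1 A \<in> bases E Ind \<longrightarrow> insert e2 A \<in> bases E Ind \<longrightarrow> e1 = e2"
    using UE unfolding unique_expansion_def by (rule conjunct2)
  have "insert x A \<in> bases E Ind" "insert y A \<in> bases E Ind" using ins_base h by auto
  then show "x = y" using U h(1-4) by metis
qed

lemma K_par: "A \<in> sM E Ind \<Longrightarrow> x \<in> KM E Ind A \<Longrightarrow> y \<in> KM E Ind A \<Longrightarrow> x \<noteq> y \<Longrightarrow> {x,y} \<notin> Ind"
proof
  assume h: "A \<in> sM E Ind" "x \<in> KM E Ind A" "y \<in> KM E Ind A" "x \<noteq> y" "{x,y} \<in> Ind"
  obtain B where B: "B \<in> bases E Ind" "{x,y} \<subseteq> B" using extend[OF h(5)] by blast
  show False using K_unique[OF h(1) B(1) _ _ h(2,3)] B(2) h(4) by simp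
qed

definition P where "P x = {y \<in> E. {y} \<in> Ind \<and> (y = x \<or> {x,y} \<notin> Ind)}"

lemma K_char: "A \<in> sM E Ind \<Longrightarrow> x \<in> KM E Ind A \<Longrightarrow> KM E Ind A = P x"
proof
  assume A: "A \<in> sM E Ind" and x: "x \<in> KM E Ind A"
  show "KM E Ind A \<subseteq> P x"
  proof
    fix y assume y: "y \<in> KM E Ind A"
    have yy: "y \<in> E" "insert y A \<in> Ind" using y unfolding KM_sM[OF A] by auto
    have "{y} \<in> Ind" using ind_sub[OF yy(2), of "{y}"] by simp
    then show "y \<in> P x" using yy(1) K_par[OF A x y] unfolding P_def by blast
  qed
  show "P x \<subseteq> KM E Ind A"
  proof
    fix y assume y: "y \<in> P x"
    show "y \<in> KM E Ind A"
    proof (cases "y = x")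
      case True then show ?thesis using x by simp
    next
      case False
      hence yi: "{y} \<in> Ind" and xy: "{x,y} \<notin> Ind" and yE: "y \<in> E" using y unfolding P_def by auto
      have xA: "insert x A \<in> Ind" "x \<notin> A" using x unfolding KM_sM[OF A] by auto
      have yA: "y \<notin> A"
      proof
        assume "y \<in> A"
        hence "{x,y} \<subseteq> insert x A" by auto
        thus False using ind_sub[OF xA(1)] xy by blast
      qed
      have cA: "card A = r - 1" "finite A" using A indfin unfolding sM_def by auto
      have cxA: "card (insert x A) = r" using cA xA rpos by simp
      obtain C where C: "C \<in> Ind" "{y} \<subseteq> C" "C \<subseteq> {y} \<union> insert x A" "card C = r"
        using aug_lemma[OF yi xA(1)] cxA rpos by auto
      have "x \<notin> C"
      proof
        assume "x \<in> C"
        hence "{x,y} \<subseteq> C" using C(2) by auto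
        thus False using ind_sub[OF C(1)] xy by blast
      qed
      hence CS: "C \<subseteq> insert y A" using C by auto
      have "card (insert y A) = r" using cA yA rpos by simp
      hence "C = insert y A" using card_subset_eq[OF _ CS] cA C by simp
      then show ?thesis unfolding KM_sM[OF A] using C(1) yA yE by blast
    qed
  qed
qed

lemma FM_eq: "K \<in> FM E Ind \<Longrightarrow> K' \<in> FM E Ind \<Longrightarrow> x \<in> K \<Longrightarrow> x \<in> K' \<Longrightarrow> K = K'"
proof -
  assume h: "K \<in> FM E Ind" "K' \<in> FM E Ind" "x \<in> K" "x \<in> K'"
  obtain A where A: "A \<in> sM E Ind" "K = KM E Ind A" using h(1) unfolding FM_def by blast
  obtain A' where A': "A' \<in> sM E Ind" "K' = KM E Ind A'" using h(2) unfolding FM_def by blast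
  have "K = P x" using K_char[OF A(1)] A(2) h(3) by simp
  moreover have "K' = P x" using K_char[OF A'(1)] A'(2) h(4) by simp
  ultimately show "K = K'" by simp
qed

lemma Kb: "B \<in> bases E Ind \<Longrightarrow> b \<in> B \<Longrightarrow> B - {b} \<in> sM E Ind \<and> b \<in> KM E Ind (B - {b})"
proof -
  assume B: "B \<in> bases E Ind" and b: "b \<in> B"
  have Bi: "B \<in> Ind" "card B = r" using B base_iff by auto
  have fB: "finite B" using indfin[OF Bi(1)] .
  have i: "B - {b} \<in> Ind" using ind_sub[OF Bi(1), of "B - {b}"] by blast
  have c: "card (B - {b}) = r - 1" using Bi(2) b fB by simp
  have s: "B - {b} \<in> sM E Ind" unfolding sM_def using i c by blast
  have bE: "b \<in> E" using indE[OF Bi(1)] b by blast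
  have ins: "insert b (B - {b}) = B" using b by blast
  have "b \<in> KM E Ind (B - {b})" unfolding KM_sM[OF s] using bE ins Bi(1) by simp
  then show ?thesis using s by blast
qed

lemma FM_unique: "K \<in> FM E Ind \<Longrightarrow> B \<in> bases E Ind \<Longrightarrow> x \<in> B \<Longrightarrow> y \<in> B
  \<Longrightarrow> x \<in> K \<Longrightarrow> y \<in> K \<Longrightarrow> x = y"
proof -
  assume h: "K \<in> FM E Ind" "B \<in> bases E Ind" "x \<in> B" "y \<in> B" "x \<in> K" "y \<in> K"
  obtain A where A: "A \<in> sM E Ind" "K = KM E Ind A" using h(1) unfolding FM_def by blast
  show "x = y" using K_unique[OF A(1) h(2-4)] h(5,6) A(2) by simp
qed

lemma FM_meets: "K \<in> FM E Ind \<Longrightarrow> B \<in> bases E Ind \<Longrightarrow> \<exists>x\<in>B. x \<in> K"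
proof -
  assume h: "K \<in> FM E Ind" "B \<in> bases E Ind"
  obtain A where A: "A \<in> sM E Ind" "K = KM E Ind A" using h(1) unfolding FM_def by blast
  show ?thesis using K_meets[OF A(1) h(2)] A(2) by simp
qed

lemma base_cover: "B \<in> bases E Ind \<Longrightarrow> \<forall>K\<in>FM E Ind. f K \<in> K \<and> f K \<in> B \<Longrightarrow> B = f ` FM E Ind"
proof -
  assume B: "B \<in> bases E Ind" and f: "\<forall>K\<in>FM E Ind. f K \<in> K \<and> f K \<in> B"
  have "b \<in> f ` FM E Ind" if b: "b \<in> B" for b
  proof -
    have k: "KM E Ind (B - {b}) \<in> FM E Ind" "b \<in> KM E Ind (B - {b})"
      using Kb[OF B b] unfolding FM_def by auto
    have "f (KM E Ind (B - {b})) = b" using FM_unique[OF k(1) B] f k b by blast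
    then show ?thesis using k by force
  qed
  then show ?thesis using f by blast
qed

lemma finFM: "finite (FM E Ind)"
proof -
  have "FM E Ind \<subseteq> Pow E" unfolding FM_def KM_def by auto
  then show ?thesis using finE finite_subset by blast
qed

lemma choose_base:
  assumes f: "\<forall>K\<in>FM E Ind. f K \<in> K"
  shows "finite T \<Longrightarrow> T \<subseteq> FM E Ind \<Longrightarrow> \<exists>B\<in>bases E Ind. f ` T \<subseteq> B"
proof (induction T rule: finite_induct)
  case empty
  then show ?case using extend empty_ind by blast
next
  case (insert K T)
  then obtain B where B: "B \<in> bases E Ind" "f ` T \<subseteq> B" by auto
  have KF: "K \<in> FM E Ind" using insert by auto
  obtain b where b: "b \<in> B" "b \<in> K" using FM_meets[OF KF B(1)] by blast
  show ?case
  proof (cases "f K = b")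
    case True then show ?thesis using B b by auto
  next
    case False
    have kb: "B - {b} \<in> sM E Ind" "b \<in> KM E Ind (B - {b})" using Kb[OF B(1) b(1)] by auto
    have "KM E Ind (B - {b}) = K" using FM_eq[OF _ KF kb(2) b(2)] kb(1) unfolding FM_def by blast
    hence B': "insert (f K) (B - {b}) \<in> bases E Ind" using ins_base[OF kb(1)] f KF by auto
    have "f ` T \<subseteq> B - {b}"
    proof
      fix z assume z: "z \<in> f ` T"
      then obtain K' where K': "K' \<in> T" "z = f K'" by blast
      have "z \<noteq> b"
      proof
        assume "z = b"
        hence "b \<in> K'" using K' f insert by auto
        hence "K' = K" using FM_eq[OF _ KF _ b(2)] K' insert by auto
        then show False using K' insert by auto
      qed
      then show "z \<in> B - {b}" using z B by auto
    qed
    then show ?thesis using B' by auto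
  qed
qed

end

theorem proposition8:
  fixes E :: "'a set" and Ind :: "'a set set"
  assumes "unique_expansion E Ind"
    and "mrank E Ind > 0"
  shows "bases E Ind = {f ` FM E Ind | f. \<forall>K\<in>FM E Ind. f K \<in> K}"
proof -
  interpret ue E Ind
  proof (unfold_locales)
    show "matroid E Ind" using assms(1) unfolding unique_expansion_def by (rule conjunct1)
  qed (use assms in auto)
  show ?thesis
  proof (intro set_eqI iffI)
    fix B assume B: "B \<in> bases E Ind"
    define f where "f K = (SOME e. e \<in> B \<and> e \<in> K)" for K
    have "\<forall>K\<in>FM E Ind. f K \<in> K \<and> f K \<in> B"
      unfolding f_def using FM_meets[OF _ B] by (metis (mono_tags, lifting) someI_ex)
    then show "B \<in> {f ` FM E Ind | f. \<forall>K\<in>FM E Ind. f K \<in> K}"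
      using base_cover[OF B] by blast
  next
    fix X assume "X \<in> {f ` FM E Ind | f. \<forall>K\<in>FM E Ind. f K \<in> K}"
    then obtain f where X: "X = f ` FM E Ind" and f: "\<forall>K\<in>FM E Ind. f K \<in> K" by blast
    obtain B where B: "B \<in> bases E Ind" "f ` FM E Ind \<subseteq> B"
      using choose_base[OF f finFM] by blast
    have "B = f ` FM E Ind" using base_cover[OF B(1)] f B(2) by blast
    then show "X \<in> bases E Ind" using X B by simp
  qed
qed

end
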